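(* Let $X=(X(t),t\in\mathbb{R})$ be a real-valued centered stationary Gaussian process with continuous sample paths, whose covariance function $R_X(t)=\mathrm{Cov}(X(0),X(t))$ is positive and satisfies $\int_0^\infty R_X(t)\,dt<\infty$. Then, with $\lambda$ the uniform (Lebesgue) probability measure on $[0,1]$, $$\lim_{a\to\infty}\frac1aC_X(a)=\Big(\lim_{a\to\infty}a\int_0^1\!\!\int_0^1R_X(a(u-v))\,\lambda(du)\lambda(dv)\Big)^{-1}=\frac{1}{2\int_0^\infty R_X(t)\,dt}.$$
   Context: For $a>0$, $C_X(a)$ is defined by $\lim_{u\to\infty}u^{-2}\log P(X(t)>u,\ 0\le t\le a)=-\frac12C_X(a)$; equivalently $C_X(a)=\big[\min_{\mu}\int_0^1\int_0^1R_X(a(u-v))\mu(du)\mu(dv)\big]^{-1}$, the minimum over Borel probability measures $\mu$ on $[0,1]$. *)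

theory Defs
  imports "HOL-Probability.Probability"
begin

definition lincomb :: "(real \<Rightarrow> 'a \<Rightarrow> real) \<Rightarrow> real list \<Rightarrow> real list \<Rightarrow> 'a \<Rightarrow> real" where
  "lincomb X ts cs = (\<lambda>\<omega>. \<Sum>i<length ts. cs ! i * X (ts ! i) \<omega>)"

definition cov :: "'a measure \<Rightarrow> ('a \<Rightarrow> real) \<Rightarrow> ('a \<Rightarrow> real) \<Rightarrow> real" where
  "cov M U V = (LINT \<omega>|M. (U \<omega> - (LINT x|M. U x)) * (V \<omega> - (LINT x|M. V x)))"

text \<open>Real-valued centered Gaussian process indexed by the reals: every finite linear
  combination of its values is a centered (possibly degenerate) normal random variable,
  expressed through its characteristic function.\<close>
definition centered_gaussian_process :: "'a measure \<Rightarrow> (real \<Rightarrow> 'a \<Rightarrow> real) \<Rightarrow> bool" where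
  "centered_gaussian_process M X \<longleftrightarrow>
     prob_space M \<and> (\<forall>t. X t \<in> borel_measurable M) \<and>
     (\<forall>ts cs. length cs = length ts \<longrightarrow>
        integrable M (\<lambda>\<omega>. (lincomb X ts cs \<omega>)\<^sup>2) \<and>
        (\<forall>\<theta>. char (distr M borel (lincomb X ts cs)) \<theta> =
              complex_of_real (exp (- (\<theta>\<^sup>2 * (LINT \<omega>|M. (lincomb X ts cs \<omega>)\<^sup>2)) / 2))))"

text \<open>Strict stationarity: all finite-dimensional distributions are shift invariant
  (stated via all finite linear combinations, which determine them by Cramer--Wold).\<close>
definition stationary_process :: "'a measure \<Rightarrow> (real \<Rightarrow> 'a \<Rightarrow> real) \<Rightarrow> bool" where
  "stationary_process M X \<longleftrightarrow>
     (\<forall>ts cs h. length cs = length ts \<longrightarrow>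
        distr M borel (lincomb X (map (\<lambda>t. t + h) ts) cs) = distr M borel (lincomb X ts cs))"

definition prob_measures_01 :: "real measure set" where
  "prob_measures_01 = {\<mu>. prob_space \<mu> \<and> sets \<mu> = sets (restrict_space borel {0..1::real})}"

definition energy :: "(real \<Rightarrow> real) \<Rightarrow> real \<Rightarrow> real measure \<Rightarrow> real" where
  "energy R a \<mu> = (LINT u|\<mu>. (LINT v|\<mu>. R (a * (u - v))))"

definition C_X :: "(real \<Rightarrow> real) \<Rightarrow> real \<Rightarrow> real" where
  "C_X R a = inverse (Inf (energy R a ` prob_measures_01))"

end

theory Submission
  imports Defs
begin


lemma lincomb1: "lincomb X [t] [c] = (\<lambda>\<omega>. c * X t \<omega>)"
  by (simp add: lincomb_def fun_eq_iff)

lemma lincomb2: "lincomb X [s,t] [c,d] = (\<lambda>\<omega>. c * X s \<omega> + d * X t \<omega>)"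
  by (simp add: lincomb_def fun_eq_iff numeral_2_eq_2 lessThan_Suc)

lemma abs_le_sq: "\<bar>x::real\<bar> \<le> 1 + x^2"
proof (cases "\<bar>x\<bar> \<le> 1")
  case True then show ?thesis by (simp add: add_increasing2)
next
  case False
  then have "\<bar>x\<bar> * 1 \<le> \<bar>x\<bar> * \<bar>x\<bar>" by (intro mult_left_mono) auto
  then show ?thesis by (simp add: power2_eq_square)
qed

lemma quad_disc:
  fixes A B C :: real
  assumes q: "\<And>l. 0 \<le> A + 2*l*B + l^2*C" and C: "0 \<le> C"
  shows "B^2 \<le> A*C"
proof (cases "C = 0")
  case True
  have "B = 0"
  proof (rule ccontr)
    assume B: "B \<noteq> 0"
    have "0 \<le> A + 2*(-(\<bar>A\<bar>+1)/(2*B))*B" using q[of "-(\<bar>A\<bar>+1)/(2*B)"] True by simp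
    also have "\<dots> = A - (\<bar>A\<bar>+1)" using B by (simp add: field_simps)
    finally show False by linarith
  qed
  then show ?thesis using True by simp
next
  case False
  then have Cp: "0 < C" using C by simp
  have "0 \<le> A + 2*(-B/C)*B + (-B/C)^2*C" by (rule q)
  also have "\<dots> = A - B^2/C" using Cp by (simp add: power2_eq_square field_simps)
  finally have "B^2/C \<le> A" by simp
  then show ?thesis using Cp by (simp add: pos_divide_le_eq mult.commute)
qed

locale proc =
  fixes M :: "'a measure" and X :: "real \<Rightarrow> 'a \<Rightarrow> real" and R :: "real \<Rightarrow> real"
  assumes gauss: "centered_gaussian_process M X"
    and stat: "stationary_process M X"
    and paths: "\<forall>\<omega>\<in>space M. continuous_on UNIV (\<lambda>t. X t \<omega>)"
    and R_def: "\<forall>t. R t = cov M (X 0) (X t)"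
begin

lemma ps: "prob_space M" using gauss by (simp add: centered_gaussian_process_def)

sublocale prob_space M by (rule ps)

lemma Xmeas[measurable]: "X t \<in> borel_measurable M"
  using gauss by (simp add: centered_gaussian_process_def)

lemma lc_meas[measurable]: "lincomb X ts cs \<in> borel_measurable M"
  unfolding lincomb_def by measurable

lemma lc_sq: "length cs = length ts \<Longrightarrow> integrable M (\<lambda>\<omega>. (lincomb X ts cs \<omega>)\<^sup>2)"
  using gauss by (simp add: centered_gaussian_process_def)

lemma sqint: "integrable M (\<lambda>\<omega>. (X s \<omega>)^2)"
  using lc_sq[of "[1]" "[s]"] by (simp add: lincomb1)

lemma sqint2: "integrable M (\<lambda>\<omega>. (X s \<omega> + X t \<omega>)^2)"
  using lc_sq[of "[1,1]" "[s,t]"] by (simp add: lincomb2)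

lemma Xint: "integrable M (X t)"
proof (rule Bochner_Integration.integrable_bound[of _ "\<lambda>\<omega>. 1 + (X t \<omega>)^2"])
  show "integrable M (\<lambda>\<omega>. 1 + (X t \<omega>)^2)" using sqint by simp
  show "AE \<omega> in M. norm (X t \<omega>) \<le> norm (1 + (X t \<omega>)^2)"
    using abs_le_sq by (intro AE_I2) (simp add: add_nonneg_nonneg)
qed simp

lemma prod_eq: "X s \<omega> * X t \<omega> = ((X s \<omega> + X t \<omega>)^2 - (X s \<omega>)^2 - (X t \<omega>)^2) / 2"
  by (simp add: power2_eq_square algebra_simps)

lemma prodint: "integrable M (\<lambda>\<omega>. X s \<omega> * X t \<omega>)"
  unfolding prod_eq by (intro integrable_divide Bochner_Integration.integrable_diff sqint sqint2)

lemma prod_int_eq: "expectation (\<lambda>\<omega>. X s \<omega> * X t \<omega>) =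
   (expectation (\<lambda>\<omega>. (X s \<omega> + X t \<omega>)^2) - expectation (\<lambda>\<omega>. (X s \<omega>)^2) - expectation (\<lambda>\<omega>. (X t \<omega>)^2)) / 2"
proof -
  have "expectation (\<lambda>\<omega>. X s \<omega> * X t \<omega>) = expectation (\<lambda>\<omega>. ((X s \<omega> + X t \<omega>)^2 - (X s \<omega>)^2 - (X t \<omega>)^2) / 2)"
    by (simp only: prod_eq)
  also have "\<dots> = (expectation (\<lambda>\<omega>. (X s \<omega> + X t \<omega>)^2) - expectation (\<lambda>\<omega>. (X s \<omega>)^2) - expectation (\<lambda>\<omega>. (X t \<omega>)^2)) / 2"
    by (simp only: integral_divide_zero Bochner_Integration.integral_diff[OF Bochner_Integration.integrable_diff[OF sqint2 sqint] sqint]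
        Bochner_Integration.integral_diff[OF sqint2 sqint])
  finally show ?thesis .
qed

lemma distr_int:
  assumes "distr M borel f = distr M borel g" "f \<in> borel_measurable M" "g \<in> borel_measurable M"
    "(h::real\<Rightarrow>real) \<in> borel_measurable borel"
  shows "expectation (\<lambda>\<omega>. h (f \<omega>)) = expectation (\<lambda>\<omega>. h (g \<omega>))"
  using integral_distr[OF assms(2) assms(4)] integral_distr[OF assms(3) assms(4)] assms(1) by simp

lemma stat': "length cs = length ts \<Longrightarrow> distr M borel (lincomb X (map (\<lambda>t. t + h) ts) cs) = distr M borel (lincomb X ts cs)"
  using stat by (simp add: stationary_process_def)

lemma mean_shift: "expectation (X (t + h)) = expectation (X t)"
proof -
  have d: "distr M borel (lincomb X [t+h] [1]) = distr M borel (lincomb X [t] [1])"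
    using stat'[of "[1]" "[t]" h] by simp
  have "expectation (\<lambda>\<omega>. (\<lambda>x. x) (lincomb X [t+h] [1] \<omega>)) = expectation (\<lambda>\<omega>. (\<lambda>x. x) (lincomb X [t] [1] \<omega>))"
    by (rule distr_int[OF d lc_meas lc_meas]) simp
  then show ?thesis by (simp add: lincomb1)
qed

lemma sq_shift: "expectation (\<lambda>\<omega>. (X (t + h) \<omega>)^2) = expectation (\<lambda>\<omega>. (X t \<omega>)^2)"
proof -
  have d: "distr M borel (lincomb X [t+h] [1]) = distr M borel (lincomb X [t] [1])"
    using stat'[of "[1]" "[t]" h] by simp
  have "expectation (\<lambda>\<omega>. (\<lambda>x. x^2) (lincomb X [t+h] [1] \<omega>)) = expectation (\<lambda>\<omega>. (\<lambda>x. x^2) (lincomb X [t] [1] \<omega>))"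
    by (rule distr_int[OF d lc_meas lc_meas]) simp
  then show ?thesis by (simp add: lincomb1)
qed

lemma sq2_shift: "expectation (\<lambda>\<omega>. (X (s + h) \<omega> + X (t + h) \<omega>)^2) = expectation (\<lambda>\<omega>. (X s \<omega> + X t \<omega>)^2)"
proof -
  have d: "distr M borel (lincomb X [s+h,t+h] [1,1]) = distr M borel (lincomb X [s,t] [1,1])"
    using stat'[of "[1,1]" "[s,t]" h] by simp
  have "expectation (\<lambda>\<omega>. (\<lambda>x. x^2) (lincomb X [s+h,t+h] [1,1] \<omega>)) = expectation (\<lambda>\<omega>. (\<lambda>x. x^2) (lincomb X [s,t] [1,1] \<omega>))"
    by (rule distr_int[OF d lc_meas lc_meas]) simp
  then show ?thesis by (simp add: lincomb2)
qed

lemma S2_shift: "expectation (\<lambda>\<omega>. X (s+h) \<omega> * X (t+h) \<omega>) = expectation (\<lambda>\<omega>. X s \<omega> * X t \<omega>)"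
  by (simp only: prod_int_eq sq_shift sq2_shift)

definition m where "m = expectation (X 0)"

lemma mean: "expectation (X t) = m"
  using mean_shift[of 0 t] by (simp add: m_def)

definition K where "K s t = expectation (\<lambda>\<omega>. X s \<omega> * X t \<omega>) - m^2"

lemma K_shift: "K (s+h) (t+h) = K s t"
  by (simp add: K_def S2_shift)

lemma K_sym: "K s t = K t s"
  by (simp add: K_def mult.commute)

lemma Yint: "integrable M (\<lambda>\<omega>. (X s \<omega> - m) * (X t \<omega> - m))"
proof -
  have "(\<lambda>\<omega>. (X s \<omega> - m) * (X t \<omega> - m)) = (\<lambda>\<omega>. X s \<omega> * X t \<omega> - m * X t \<omega> - m * X s \<omega> + m^2)"
    by (simp add: fun_eq_iff algebra_simps power2_eq_square)
  then show ?thesis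
    by (simp add: prodint Xint)
qed

lemma K_eq: "K s t = expectation (\<lambda>\<omega>. (X s \<omega> - m) * (X t \<omega> - m))"
proof -
  have "expectation (\<lambda>\<omega>. (X s \<omega> - m) * (X t \<omega> - m)) = expectation (\<lambda>\<omega>. X s \<omega> * X t \<omega> - m * X t \<omega> - m * X s \<omega> + m^2)"
    by (simp add: algebra_simps power2_eq_square)
  also have "\<dots> = expectation (\<lambda>\<omega>. X s \<omega> * X t \<omega>) - m * m - m * m + m^2"
    by (simp add: prodint Xint mean prob_space)
  finally show ?thesis by (simp add: K_def power2_eq_square)
qed

lemma R_K: "R t = K 0 t"
  using R_def by (simp add: cov_def mean K_eq)

lemma R_diff: "R (t - s) = K s t"
  using K_shift[of 0 s "t - s"] by (simp add: R_K)

lemma R_even: "R (-t) = R t"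
  using R_diff[of 0 t] R_diff[of t 0] K_sym[of 0 t] by simp

lemma R_pd: "finite (Kset::int set) \<Longrightarrow> 0 \<le> (\<Sum>k\<in>Kset. \<Sum>l\<in>Kset. c k * c l * R (x k - x l))"
proof -
  assume fin: "finite Kset"
  let ?Y = "\<lambda>k \<omega>. X (x k) \<omega> - m"
  have "(\<Sum>k\<in>Kset. \<Sum>l\<in>Kset. c k * c l * R (x k - x l)) =
        (\<Sum>k\<in>Kset. \<Sum>l\<in>Kset. expectation (\<lambda>\<omega>. c k * c l * (?Y l \<omega> * ?Y k \<omega>)))"
    by (simp add: R_diff K_eq)
  also have "\<dots> = (\<Sum>k\<in>Kset. expectation (\<lambda>\<omega>. \<Sum>l\<in>Kset. c k * c l * (?Y l \<omega> * ?Y k \<omega>)))"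
    by (intro sum.cong refl Bochner_Integration.integral_sum[symmetric] integrable_mult_right Yint)
  also have "\<dots> = expectation (\<lambda>\<omega>. \<Sum>k\<in>Kset. \<Sum>l\<in>Kset. c k * c l * (?Y l \<omega> * ?Y k \<omega>))"
    by (intro Bochner_Integration.integral_sum[symmetric] Bochner_Integration.integrable_sum integrable_mult_right Yint)
  also have "\<dots> = expectation (\<lambda>\<omega>. (\<Sum>k\<in>Kset. c k * ?Y k \<omega>)^2)"
  proof (rule Bochner_Integration.integral_cong[OF refl])
    fix \<omega>
    show "(\<Sum>k\<in>Kset. \<Sum>l\<in>Kset. c k * c l * (?Y l \<omega> * ?Y k \<omega>)) = (\<Sum>k\<in>Kset. c k * ?Y k \<omega>)^2"
      unfolding power2_eq_square sum_product by (intro sum.cong refl) (simp add: ac_simps)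
  qed
  also have "\<dots> \<ge> 0" by simp
  finally show ?thesis .
qed


lemma R_bnd: "R t \<le> R 0"
proof -
  have "0 \<le> (\<Sum>k\<in>{0,1::int}. \<Sum>l\<in>{0,1::int}. (\<lambda>k. if k = 0 then 1 else -1) k * (\<lambda>k. if k = 0 then 1 else -1) l
      * R ((\<lambda>k. if k = 0 then 0 else t) k - (\<lambda>k. if k = 0 then 0 else t) l))"
    by (rule R_pd) simp
  then show ?thesis by (simp add: R_even)
qed

lemma v_eq: "expectation (\<lambda>\<omega>. (X h \<omega> - X 0 \<omega>)^2) = 2*R 0 - 2*R h"
proof -
  have "(\<lambda>\<omega>. (X h \<omega> - X 0 \<omega>)^2) = (\<lambda>\<omega>. (X h \<omega> - m)*(X h \<omega> - m) - 2*((X 0 \<omega> - m)*(X h \<omega> - m)) + (X 0 \<omega> - m)*(X 0 \<omega> - m))"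
    by (simp add: fun_eq_iff power2_eq_square algebra_simps)
  then have "expectation (\<lambda>\<omega>. (X h \<omega> - X 0 \<omega>)^2) = K h h - 2 * K 0 h + K 0 0"
    by (simp add: K_eq Yint)
  moreover have "K h h = K 0 0" using K_shift[of 0 h 0] by simp
  ultimately show ?thesis by (simp add: R_K)
qed

lemma gchar: "length cs = length ts \<Longrightarrow> char (distr M borel (lincomb X ts cs)) \<theta> =
    complex_of_real (exp (- (\<theta>\<^sup>2 * (LINT \<omega>|M. (lincomb X ts cs \<omega>)\<^sup>2)) / 2))"
  using gauss unfolding centered_gaussian_process_def by blast

lemma lcZ: "lincomb X [h,0] [1,-1] = (\<lambda>\<omega>. X h \<omega> - X 0 \<omega>)"
  by (simp add: lincomb2)

lemma iexp_cont: "continuous_on UNIV iexp"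
  by (intro continuous_at_imp_continuous_on ballI isCont_iexp)

lemma char_Z: "(CLINT \<omega>|M. iexp (X h \<omega> - X 0 \<omega>)) = complex_of_real (exp (- (2*R 0 - 2*R h) / 2))"
proof -
  have "char (distr M borel (lincomb X [h,0] [1,-1])) 1 =
      complex_of_real (exp (- (1\<^sup>2 * (LINT \<omega>|M. (lincomb X [h,0] [1,-1] \<omega>)\<^sup>2)) / 2))"
    by (rule gchar) simp
  then have "char (distr M borel (\<lambda>\<omega>. X h \<omega> - X 0 \<omega>)) 1 = complex_of_real (exp (- (2*R 0 - 2*R h) / 2))"
    by (simp only: lcZ v_eq power_one mult_1)
  moreover have "char (distr M borel (\<lambda>\<omega>. X h \<omega> - X 0 \<omega>)) 1 = (CLINT \<omega>|M. iexp (X h \<omega> - X 0 \<omega>))"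
    unfolding char_def
    by (subst integral_distr) (auto intro: borel_measurable_continuous_on[OF iexp_cont])
  ultimately show ?thesis by simp
qed

lemma R_cont0: "(R \<longlongrightarrow> R 0) (at 0)"
proof -
  have "(R \<longlongrightarrow> R 0) (at 0 within UNIV)"
  proof (subst tendsto_at_iff_sequentially, intro allI impI)
    fix hs :: "nat \<Rightarrow> real" assume hs: "hs \<longlonglongrightarrow> 0"
    have A: "(\<lambda>n. CLINT \<omega>|M. iexp (X (hs n) \<omega> - X 0 \<omega>)) \<longlonglongrightarrow> (CLINT \<omega>|M. 1)"
    proof (rule integral_dominated_convergence[where w="\<lambda>_. 1"])
      show "(\<lambda>\<omega>. iexp (X (hs n) \<omega> - X 0 \<omega>)) \<in> borel_measurable M" for n
        by (rule borel_measurable_continuous_on[OF iexp_cont]) simp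
      show "AE \<omega> in M. (\<lambda>n. iexp (X (hs n) \<omega> - X 0 \<omega>)) \<longlonglongrightarrow> 1"
      proof (rule AE_I2)
        fix \<omega> assume w: "\<omega> \<in> space M"
        have "isCont (\<lambda>t. X t \<omega>) 0" using paths w by (simp add: continuous_on_eq_continuous_at)
        then have "(\<lambda>n. X (hs n) \<omega>) \<longlonglongrightarrow> X 0 \<omega>" by (rule isCont_tendsto_compose[OF _ hs])
        then have "(\<lambda>n. X (hs n) \<omega> - X 0 \<omega>) \<longlonglongrightarrow> X 0 \<omega> - X 0 \<omega>" by (intro tendsto_intros)
        then have "(\<lambda>n. iexp (X (hs n) \<omega> - X 0 \<omega>)) \<longlonglongrightarrow> iexp (X 0 \<omega> - X 0 \<omega>)"
          by (rule isCont_tendsto_compose[OF isCont_iexp])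
        then show "(\<lambda>n. iexp (X (hs n) \<omega> - X 0 \<omega>)) \<longlonglongrightarrow> 1" by simp
      qed
    qed auto
    have "(CLINT \<omega>|M. (1::complex)) = 1" by (simp add: prob_space)
    with A have "(\<lambda>n. complex_of_real (exp (- (2*R 0 - 2*R (hs n)) / 2))) \<longlonglongrightarrow> complex_of_real 1"
      by (simp only: char_Z of_real_1)
    then have "(\<lambda>n. exp (- (2*R 0 - 2*R (hs n)) / 2)) \<longlonglongrightarrow> 1"
      by (simp only: tendsto_of_real_iff)
    then have "(\<lambda>n. ln (exp (- (2*R 0 - 2*R (hs n)) / 2))) \<longlonglongrightarrow> ln 1"
      by (intro tendsto_intros) auto
    moreover have "ln (exp (- (2*R 0 - 2*R (hs n)) / 2)) = R (hs n) - R 0" for n by simp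
    ultimately have "(\<lambda>n. R (hs n) - R 0) \<longlonglongrightarrow> 0" by (simp only: ln_one)
    then show "(R \<circ> hs) \<longlonglongrightarrow> R 0" by (simp add: Lim_null[symmetric] comp_def)
  qed
  then show ?thesis by simp
qed

lemma R_cont: "continuous_on UNIV R"
proof (intro continuous_at_imp_continuous_on ballI)
  fix t :: real
  have q: "(R (t+h) - R t)^2 \<le> R 0 * (2*R 0 - 2*R h)" for h
  proof (rule quad_disc)
    show "0 \<le> 2*R 0 - 2*R h" using R_bnd[of h] by simp
    fix l :: real
    let ?c = "\<lambda>k::int. if k = 0 then 1 else if k = 1 then l else -l"
    let ?x = "\<lambda>k::int. if k = 0 then 0 else if k = 1 then t+h else t"
    have "0 \<le> (\<Sum>k\<in>{0,1,2::int}. \<Sum>j\<in>{0,1,2::int}. ?c k * ?c j * R (?x k - ?x j))"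
      by (rule R_pd) simp
    moreover have "R (- h - t) = R (h + t)" using R_even[of "h+t"] by simp
    ultimately show "0 \<le> R 0 + 2*l*(R (t+h) - R t) + l^2*(2*R 0 - 2*R h)"
      by (simp add: R_even algebra_simps power2_eq_square)
  qed
  have b: "norm (R (t+h) - R t) \<le> sqrt (R 0 * (2*R 0 - 2*R h))" for h
    using real_le_rsqrt[of "\<bar>R (t+h) - R t\<bar>"] q[of h] by simp
  have "((\<lambda>h. sqrt (R 0 * (2*R 0 - 2*R h))) \<longlongrightarrow> sqrt (R 0 * (2*R 0 - 2*R 0))) (at 0)"
    by (intro tendsto_intros R_cont0)
  then have "((\<lambda>h. sqrt (R 0 * (2*R 0 - 2*R h))) \<longlongrightarrow> 0) (at 0)" by simp
  then have "((\<lambda>h. R (t+h) - R t) \<longlongrightarrow> 0) (at 0)"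
    by (rule Lim_null_comparison[rotated]) (intro always_eventually allI, use b in simp)
  then show "isCont R t" by (simp add: isCont_iff Lim_null[symmetric])
qed

end




locale Rfun =
  fixes R :: "real \<Rightarrow> real"
  assumes cont: "continuous_on UNIV R"
    and even: "\<And>t. R (-t) = R t"
    and pos: "\<And>t. R t > 0"
    and bnd: "\<And>t. R t \<le> R 0"
    and pd: "\<And>(K::int set) c x. finite K \<Longrightarrow> 0 \<le> (\<Sum>k\<in>K. \<Sum>l\<in>K. c k * c l * R (x k - x l))"
    and int: "set_integrable lborel {0..} R"
begin

definition P where "P x = (LBINT s=ereal 0..ereal x. R s)"
definition I where "I = (LINT t:{0..}|lborel. R t)"

lemma R_meas[measurable]: "R \<in> borel_measurable borel"
  using borel_measurable_continuous_onI[OF cont] .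

lemma isCont_R: "isCont R x"
  using cont by (simp add: continuous_on_eq_continuous_at)

lemma P_deriv: "(P has_real_derivative R x) (at x)"
proof -
  have "((\<lambda>u. LBINT y=ereal 0..u. R y) has_vector_derivative (R x)) (at x within {-\<bar>x\<bar>-1..\<bar>x\<bar>+1})"
    by (rule interval_integral_FTC2) (auto intro: continuous_on_subset[OF cont])
  moreover have "at x within {-\<bar>x\<bar>-1..\<bar>x\<bar>+1} = at x"
    by (rule at_within_Icc_at) auto
  moreover have "P = (\<lambda>u. LBINT y=ereal 0..u. R y)" by (simp add: P_def fun_eq_iff)
  ultimately show ?thesis
    by (simp add: has_real_derivative_iff_has_vector_derivative)
qed

lemma P_chain[derivative_intros]:
  "(g has_real_derivative g') (at x) \<Longrightarrow> ((\<lambda>x. P (g x)) has_real_derivative R (g x) * g') (at x)"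
  by (rule DERIV_chain2[OF P_deriv])

lemma isCont_P: "isCont P x"
  using P_deriv DERIV_isCont by blast

lemma P_cont: "continuous_on UNIV P"
  using isCont_P by (simp add: continuous_on_eq_continuous_at)

lemma P_meas[measurable]: "P \<in> borel_measurable borel"
  using borel_measurable_continuous_onI[OF P_cont] .

lemma P_0: "P 0 = 0" by (simp add: P_def)

lemma P_odd: "P (-x) = - P x"
proof -
  have "\<forall>y. ((\<lambda>x. P x + P (-x)) has_real_derivative 0) (at y)"
  proof
    fix y
    have "((\<lambda>x. P x + P (-x)) has_real_derivative R y + R (-y) * (-1)) (at y)"
      by (intro derivative_intros DERIV_ident P_deriv)
    then show "((\<lambda>x. P x + P (-x)) has_real_derivative 0) (at y)"
      by (simp add: even)
  qed
  from DERIV_isconst_all[OF this, of x 0] show ?thesis by (simp add: P_0)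
qed

lemma P_strict: "x < y \<Longrightarrow> P x < P y"
  by (rule DERIV_pos_imp_increasing) (use P_deriv pos in blast)+

lemma P_mono: "x \<le> y \<Longrightarrow> P x \<le> P y"
  using P_strict by (cases "x = y") (auto simp: order_le_less)

lemma P_pos: "0 < x \<Longrightarrow> 0 < P x"
  using P_strict[of 0 x] P_0 by simp

lemma P_nonneg: "0 \<le> x \<Longrightarrow> 0 \<le> P x"
  using P_mono[of 0 x] P_0 by simp

lemma P_eq: "0 \<le> x \<Longrightarrow> P x = (LINT t:{0..x}|lborel. R t)"
  by (simp add: P_def interval_integral_Icc)

lemma I_nonneg: "0 \<le> I"
  unfolding I_def set_lebesgue_integral_def
  using pos by (intro Bochner_Integration.integral_nonneg) (auto simp: indicator_def less_imp_le)

lemma P_le_I: "P x \<le> I"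
proof (cases "0 \<le> x")
  case True
  have "(LINT t:{0..x}|lborel. R t) \<le> I"
    unfolding I_def set_lebesgue_integral_def
    using int pos unfolding set_integrable_def
    by (intro integral_mono') (auto simp: indicator_def less_imp_le)
  then show ?thesis using P_eq[OF True] by simp
next
  case False
  then have "P x \<le> P 0" by (intro P_mono) simp
  then show ?thesis using P_0 I_nonneg by simp
qed

lemma I_pos: "0 < I"
  using P_le_I[of 1] P_pos[of 1] by simp

lemma P_lim: "(P \<longlongrightarrow> I) at_top"
proof -
  have "((\<lambda>b. LINT t:{0..b}|lborel. R t) \<longlongrightarrow> I) at_top"
    unfolding I_def by (rule tendsto_set_lebesgue_integral_at_top) (auto simp: int)
  moreover have "eventually (\<lambda>b. (LINT t:{0..b}|lborel. R t) = P b) at_top"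
    using eventually_ge_at_top[of 0] by eventually_elim (simp add: P_eq)
  ultimately show ?thesis by (rule Lim_transform_eventually)
qed

lemma P_lim_mult: "0 < c \<Longrightarrow> ((\<lambda>a. P (a * c)) \<longlongrightarrow> I) at_top"
proof -
  assume c: "0 < c"
  have "filterlim (\<lambda>a. c * a) at_top at_top"
    by (rule filterlim_tendsto_pos_mult_at_top[OF tendsto_const c filterlim_ident])
  then have "filterlim (\<lambda>a. a * c) at_top at_top" by (simp add: mult.commute)
  then show ?thesis by (rule filterlim_compose[OF P_lim])
qed

lemma inner:
  assumes "\<alpha> \<le> \<beta>" "0 < a"
  shows "(LINT v:{\<alpha>..\<beta>}|lborel. R (a*(u-v))) = (P (a*(u-\<alpha>)) - P (a*(u-\<beta>))) / a"
proof -
  have "(LINT v:{\<alpha>..\<beta>}|lborel. R (a*(u-v))) = (LBINT v=\<alpha>..\<beta>. R(a*(u-v)))"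
    by (simp add: interval_integral_Icc assms)
  also have "\<dots> = (-P(a*(u-\<beta>))/a) - (-P(a*(u-\<alpha>))/a)"
  proof (rule interval_integral_FTC_finite)
    show "continuous_on {min \<alpha> \<beta>..max \<alpha> \<beta>} (\<lambda>v. R (a * (u - v)))"
      by (intro continuous_on_compose2[OF cont] continuous_intros) auto
    fix x
    have d1: "((\<lambda>v. a*(u-v)) has_real_derivative a*(0-1)) (at x)"
      by (intro DERIV_cmult DERIV_diff DERIV_const DERIV_ident)
    have d2: "((\<lambda>v. P(a*(u-v))) has_real_derivative R(a*(u-x)) * (a*(0-1))) (at x)"
      by (rule P_chain[OF d1])
    have d3: "((\<lambda>v. -P(a*(u-v))/a) has_real_derivative -(R(a*(u-x)) * (a*(0-1)))/a) (at x)"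
      by (intro DERIV_cdivide DERIV_minus d2)
    have "((\<lambda>v. -P(a*(u-v))/a) has_real_derivative R(a*(u-x))) (at x)"
      by (rule DERIV_cong[OF d3]) (use assms in simp)
    then show "((\<lambda>v. -P(a*(u-v))/a) has_vector_derivative R(a*(u-x))) (at x within {min \<alpha> \<beta>..max \<alpha> \<beta>})"
      by (simp add: has_real_derivative_iff_has_vector_derivative[symmetric] has_field_derivative_at_within)
  qed
  finally show ?thesis by (simp add: diff_divide_distrib)
qed

lemma part1: "((\<lambda>a. a * (LINT u:{0..1}|lborel. (LINT v:{0..1}|lborel. R (a*(u-v))))) \<longlongrightarrow> 2*I) at_top"
proof -
  have ev: "eventually (\<lambda>a. (LINT u:{0..1}|lborel. P (a*u) + P (a*(1-u))) =
      a * (LINT u:{0..1}|lborel. (LINT v:{0..1}|lborel. R (a*(u-v))))) at_top"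
    using eventually_gt_at_top[of 0]
  proof eventually_elim
    case (elim a)
    have "a * (LINT u:{0..1}|lborel. (LINT v:{0..1}|lborel. R (a*(u-v)))) =
       (LINT u:{0..1}|lborel. a * (LINT v:{0..1}|lborel. R (a*(u-v))))" by simp
    also have "\<dots> = (LINT u:{0..1}|lborel. P (a*u) + P (a*(1-u)))"
    proof (rule set_lebesgue_integral_cong, simp, safe)
      fix u
      have "P (a*(u-1)) = - P (a*(1-u))" using P_odd[of "a*(1-u)"] by (simp add: algebra_simps)
      then show "a * (LINT v:{0..1}|lborel. R (a*(u-v))) = P (a*u) + P (a*(1-u))"
        using inner[of 0 1 a u] elim by simp
    qed
    finally show ?case by simp
  qed
  have wint: "integrable lborel (\<lambda>u::real. indicator {0..1} u *\<^sub>R (2*I))"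
    by (rule borel_integrable_compact) (auto simp: compact_Icc)
  have "((\<lambda>a. (LINT u:{0..1}|lborel. P (a*u) + P (a*(1-u)))) \<longlongrightarrow> (LINT u:{0..1::real}|lborel. 2*I)) at_top"
    unfolding set_lebesgue_integral_def
  proof (rule integral_dominated_convergence_at_top[OF _ _ wint])
    show "AE x in lborel. ((\<lambda>i. indicator {0..1} x *\<^sub>R (P (i * x) + P (i * (1 - x)))) \<longlongrightarrow>
        indicator {0..1} x *\<^sub>R (2 * I)) at_top"
      using AE_lborel_singleton[of 0] AE_lborel_singleton[of 1]
    proof eventually_elim
      case (elim x)
      show ?case
      proof (cases "x \<in> {0..1}")
        case True
        then have "0 < x" "0 < 1 - x" using elim by auto
        from tendsto_add[OF P_lim_mult[OF this(1)] P_lim_mult[OF this(2)]]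
        show ?thesis using True by simp
      qed simp
    qed
    show "\<forall>\<^sub>F i in at_top. AE x in lborel. norm (indicator {0..1} x *\<^sub>R (P (i * x) + P (i * (1 - x))))
        \<le> indicator {0..1} x *\<^sub>R (2 * I)"
      using eventually_gt_at_top[of 0]
    proof eventually_elim
      case (elim a)
      show ?case
      proof (rule AE_I2)
        fix x
        show "norm (indicator {0..1} x *\<^sub>R (P (a * x) + P (a * (1 - x)))) \<le> indicator {0..1} x *\<^sub>R (2 * I)"
        proof (cases "x \<in> {0..1}")
          case True
          then have "0 \<le> P (a*x)" "0 \<le> P (a*(1-x))" using elim by (auto intro!: P_nonneg)
          then show ?thesis using True P_le_I[of "a*x"] P_le_I[of "a*(1-x)"] by simp
        qed simp
      qed
    qed
  qed auto
  moreover have "(LINT u:{0..1::real}|lborel. 2*I) = 2*I"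
    by (subst set_integral_const) auto
  ultimately show ?thesis using ev by (auto intro: Lim_transform_eventually)
qed


definition gr :: "nat \<Rightarrow> real \<Rightarrow> real" where
  "gr n u = real_of_int \<lfloor>real (Suc n) * u\<rfloor> / real (Suc n)"
definition KK :: "nat \<Rightarrow> real \<Rightarrow> int set" where
  "KK n C = {-(\<lceil>real (Suc n) * C\<rceil> + 1) .. \<lceil>real (Suc n) * C\<rceil> + 1}"
definition AA :: "nat \<Rightarrow> int \<Rightarrow> real set" where
  "AA n l = {u. \<lfloor>real (Suc n) * u\<rfloor> = l}"

lemma finite_KK: "finite (KK n C)" by (simp add: KK_def)

lemma floor_meas[measurable]: "(\<lambda>v. real_of_int \<lfloor>real (Suc n) * v\<rfloor>) \<in> borel_measurable borel"
  by (rule measurable_compose[OF _ borel_measurable_real_floor]) simp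

lemma gr_meas[measurable]: "gr n \<in> borel_measurable borel"
  unfolding gr_def by measurable

lemma AA_sets: "AA n l \<in> sets borel"
proof -
  have "AA n l = (\<lambda>u. real_of_int \<lfloor>real (Suc n) * u\<rfloor>) -` {real_of_int l}"
    by (auto simp: AA_def)
  moreover have "{real_of_int l} \<in> sets borel" by simp
  ultimately show ?thesis
    using measurable_sets_borel[OF floor_meas[of n]] by metis
qed

lemma floor_in_KK:
  assumes "\<bar>u\<bar> \<le> C"
  shows "\<lfloor>real (Suc n) * u\<rfloor> \<in> KK n C"
proof -
  let ?N = "real (Suc n)"
  have N: "0 < ?N" by simp
  have b1: "-(?N*C) \<le> ?N*u" "?N*u \<le> ?N*C"
    using assms mult_left_mono[of u C ?N] mult_left_mono[of "-C" u ?N] by (auto simp: abs_le_iff)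
  have c1: "?N*C \<le> real_of_int \<lceil>?N*C\<rceil>" by (rule le_of_int_ceiling)
  have f1: "real_of_int \<lfloor>?N*u\<rfloor> \<le> ?N*u" "?N*u < real_of_int \<lfloor>?N*u\<rfloor> + 1"
    by linarith+
  have "-(real_of_int \<lceil>?N*C\<rceil>) - 1 < real_of_int \<lfloor>?N*u\<rfloor> + 1"
    using b1 c1 f1 by linarith
  then have "real_of_int (-(\<lceil>?N*C\<rceil> + 1)) < real_of_int (\<lfloor>?N*u\<rfloor> + 1)" by simp
  then have "-(\<lceil>?N*C\<rceil> + 1) < \<lfloor>?N*u\<rfloor> + 1" by (simp only: of_int_less_iff)
  moreover have "real_of_int \<lfloor>?N*u\<rfloor> \<le> real_of_int \<lceil>?N*C\<rceil> + 1"
    using b1 c1 f1 by linarith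
  then have "real_of_int \<lfloor>?N*u\<rfloor> \<le> real_of_int (\<lceil>?N*C\<rceil> + 1)" by simp
  then have "\<lfloor>?N*u\<rfloor> \<le> \<lceil>?N*C\<rceil> + 1" by (simp only: of_int_le_iff)
  ultimately show ?thesis by (simp add: KK_def)
qed

lemma gr_lim: "(\<lambda>n. gr n u) \<longlonglongrightarrow> u"
proof -
  have bnd: "norm (gr n u - u) \<le> 1 / real (Suc n)" for n
  proof -
    let ?N = "real (Suc n)"
    have f1: "real_of_int \<lfloor>?N*u\<rfloor> \<le> ?N*u" "?N*u < real_of_int \<lfloor>?N*u\<rfloor> + 1"
      by linarith+
    have N: "0 < ?N" by simp
    have e: "gr n u - u = (real_of_int \<lfloor>?N*u\<rfloor> - ?N*u) / ?N"
      by (simp add: gr_def field_simps)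
    have a: "\<bar>real_of_int \<lfloor>?N*u\<rfloor> - ?N*u\<bar> \<le> 1" unfolding abs_le_iff using f1 by (intro conjI; linarith)
    show ?thesis
      by (simp only: e real_norm_def abs_divide abs_of_pos[OF N]) (rule divide_right_mono[OF a], simp)
  qed
  have "(\<lambda>n. 1 / real (Suc n)) \<longlonglongrightarrow> 0"
    using LIMSEQ_Suc[OF lim_1_over_n] by simp
  then have "(\<lambda>n. gr n u - u) \<longlonglongrightarrow> 0"
    by (rule Lim_null_comparison[rotated]) (use bnd in simp)
  then show ?thesis by (simp add: Lim_null[symmetric])
qed

lemma meas_transfer:
  assumes "sets N = sets (restrict_space borel S)" "f \<in> borel_measurable borel"
  shows "f \<in> borel_measurable N"
  by (subst measurable_cong_sets[OF assms(1) refl]) (rule measurable_restrict_space1[OF assms(2)])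

lemma disc:
  assumes fm: "finite_measure N" and sN: "sets N = sets (restrict_space borel S)" and SC: "S \<subseteq> {-C..C}"
  shows "(\<integral>v. h (gr n v) \<partial>N) = (\<Sum>l\<in>KK n C. h (real_of_int l / real (Suc n)) * measure N (AA n l \<inter> space N))"
proof -
  interpret finite_measure N by (rule fm)
  have spN: "space N = S" using sets_eq_imp_space_eq[OF sN] by (simp add: space_restrict_space)
  have Bsets: "AA n l \<inter> space N \<in> sets N" for l
    unfolding sN sets_restrict_space spN using AA_sets[of n l] by auto
  have pt: "h (gr n v) = (\<Sum>l\<in>KK n C. h (real_of_int l / real (Suc n)) * indicator (AA n l \<inter> space N) v)"
    if v: "v \<in> space N" for v
  proof -
    have "v \<in> {-C..C}" using v SC spN by auto
    then have k: "\<lfloor>real (Suc n) * v\<rfloor> \<in> KK n C" by (intro floor_in_KK) (auto simp: abs_le_iff)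
    moreover have "(\<Sum>l\<in>KK n C. h (real_of_int l / real (Suc n)) * indicator (AA n l \<inter> space N) v)
        = (\<Sum>l\<in>KK n C. if l = \<lfloor>real (Suc n) * v\<rfloor> then h (real_of_int l / real (Suc n)) else 0)"
      by (rule sum.cong) (auto simp: indicator_def AA_def v)
    moreover have "(\<Sum>l\<in>KK n C. if l = \<lfloor>real (Suc n) * v\<rfloor> then h (real_of_int l / real (Suc n)) else 0)
       = h (real_of_int \<lfloor>real (Suc n) * v\<rfloor> / real (Suc n))"
      by (simp only: sum.delta[OF finite_KK] if_P[OF k])
    ultimately show ?thesis by (simp only: gr_def)
  qed
  have "(\<integral>v. h (gr n v) \<partial>N) = (\<integral>v. (\<Sum>l\<in>KK n C. h (real_of_int l / real (Suc n)) * indicator (AA n l \<inter> space N) v) \<partial>N)"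
    by (rule Bochner_Integration.integral_cong[OF refl pt])
  also have "\<dots> = (\<Sum>l\<in>KK n C. (\<integral>v. h (real_of_int l / real (Suc n)) * indicator (AA n l \<inter> space N) v \<partial>N))"
    by (rule Bochner_Integration.integral_sum) (auto intro!: integrable_mult_right simp: Bsets emeasure_real less_top[symmetric])
  also have "\<dots> = (\<Sum>l\<in>KK n C. h (real_of_int l / real (Suc n)) * measure N (AA n l \<inter> space N))"
    by (simp add: Int_assoc)
  finally show ?thesis .
qed


definition J :: "real \<Rightarrow> real measure \<Rightarrow> real measure \<Rightarrow> real" where
  "J a N1 N2 = (\<integral>u. (\<integral>v. R (a*(u-v)) \<partial>N2) \<partial>N1)"
definition Jn :: "nat \<Rightarrow> real \<Rightarrow> real measure \<Rightarrow> real measure \<Rightarrow> real" where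
  "Jn n a N1 N2 = (\<integral>u. (\<integral>v. R (a*(gr n u - gr n v)) \<partial>N2) \<partial>N1)"

lemma R_abs: "norm (R t) \<le> R 0"
  using pos[of t] bnd[of t] by simp

lemma R_abs': "\<bar>R t\<bar> \<le> R 0"
  using pos[of t] bnd[of t] by simp

lemma int_bound:
  fixes g :: "'a \<Rightarrow> real"
  assumes "finite_measure N" "\<And>v. v \<in> space N \<Longrightarrow> norm (g v) \<le> B" "0 \<le> B"
  shows "norm (\<integral>v. g v \<partial>N) \<le> B * measure N (space N)"
proof -
  interpret finite_measure N by fact
  have "norm (\<integral>v. g v \<partial>N) \<le> (\<integral>v. norm (g v) \<partial>N)" by (rule Bochner_Integration.integral_norm_bound)
  also have "\<dots> \<le> (\<integral>v. B \<partial>N)"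
    by (rule integral_mono') (use assms in auto)
  finally show ?thesis by (simp add: mult.commute)
qed

lemma Jn_eq:
  assumes f1: "finite_measure N1" and s1: "sets N1 = sets (restrict_space borel S1)" and c1: "S1 \<subseteq> {-C..C}"
    and f2: "finite_measure N2" and s2: "sets N2 = sets (restrict_space borel S2)" and c2: "S2 \<subseteq> {-C..C}"
  shows "Jn n a N1 N2 = (\<Sum>k\<in>KK n C. \<Sum>l\<in>KK n C. measure N1 (AA n k \<inter> space N1) * measure N2 (AA n l \<inter> space N2)
      * R (a*(real_of_int k / real (Suc n)) - a*(real_of_int l / real (Suc n))))"
proof -
  interpret N1: finite_measure N1 by fact
  let ?m1 = "\<lambda>k. measure N1 (AA n k \<inter> space N1)"
  let ?m2 = "\<lambda>k. measure N2 (AA n k \<inter> space N2)"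
  let ?N = "real (Suc n)"
  have e1: "(\<integral>v. R (a*(gr n u - gr n v)) \<partial>N2) = (\<Sum>l\<in>KK n C. R (a*(gr n u - real_of_int l / ?N)) * ?m2 l)" for u
    using disc[OF f2 s2 c2, of "\<lambda>y. R (a*(gr n u - y))" n] by simp
  have e2: "(\<integral>u. R (a*(gr n u - real_of_int l / ?N)) \<partial>N1) = (\<Sum>k\<in>KK n C. R (a*(real_of_int k / ?N - real_of_int l / ?N)) * ?m1 k)" for l
    using disc[OF f1 s1 c1, of "\<lambda>y. R (a*(y - real_of_int l / ?N))" n] by simp
  have "Jn n a N1 N2 = (\<integral>u. (\<Sum>l\<in>KK n C. R (a*(gr n u - real_of_int l / ?N)) * ?m2 l) \<partial>N1)"
    unfolding Jn_def e1 ..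
  also have "\<dots> = (\<Sum>l\<in>KK n C. (\<integral>u. R (a*(gr n u - real_of_int l / ?N)) * ?m2 l \<partial>N1))"
    by (rule Bochner_Integration.integral_sum)
       (auto intro!: N1.integrable_const_bound[where B="R 0"] meas_transfer[OF s1] simp: R_abs R_abs')
  also have "\<dots> = (\<Sum>l\<in>KK n C. (\<Sum>k\<in>KK n C. R (a*(real_of_int k / ?N - real_of_int l / ?N)) * ?m1 k) * ?m2 l)"
    by (simp only: integral_mult_left_zero e2)
  also have "\<dots> = (\<Sum>l\<in>KK n C. \<Sum>k\<in>KK n C. ?m1 k * ?m2 l * R (a*(real_of_int k / ?N) - a*(real_of_int l / ?N)))"
    by (rule sum.cong[OF refl], subst sum_distrib_right, rule sum.cong[OF refl], simp add: right_diff_distrib ac_simps)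
  also have "\<dots> = (\<Sum>k\<in>KK n C. \<Sum>l\<in>KK n C. ?m1 k * ?m2 l * R (a*(real_of_int k / ?N) - a*(real_of_int l / ?N)))"
    by (rule sum.swap)
  finally show ?thesis .
qed

lemma Jn_lim:
  assumes f1: "finite_measure N1" and s1: "sets N1 = sets (restrict_space borel S1)" and c1: "S1 \<subseteq> {-C..C}"
    and f2: "finite_measure N2" and s2: "sets N2 = sets (restrict_space borel S2)" and c2: "S2 \<subseteq> {-C..C}"
  shows "(\<lambda>n. Jn n a N1 N2) \<longlonglongrightarrow> J a N1 N2"
proof -
  interpret N1: finite_measure N1 by fact
  interpret N2: finite_measure N2 by fact
  have inner: "(\<lambda>n. \<integral>v. R (a*(gr n u - gr n v)) \<partial>N2) \<longlonglongrightarrow> (\<integral>v. R (a*(u-v)) \<partial>N2)" for u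
  proof (rule integral_dominated_convergence[where w="\<lambda>_. R 0"])
    show "(\<lambda>v. R (a*(u-v))) \<in> borel_measurable N2" by (rule meas_transfer[OF s2]) simp
    show "(\<lambda>v. R (a*(gr i u - gr i v))) \<in> borel_measurable N2" for i by (rule meas_transfer[OF s2]) simp
    show "integrable N2 (\<lambda>_. R 0)" by simp
    show "AE v in N2. (\<lambda>i. R (a*(gr i u - gr i v))) \<longlonglongrightarrow> R (a*(u-v))"
      by (intro AE_I2 isCont_tendsto_compose[OF isCont_R] tendsto_intros gr_lim)
    show "AE v in N2. norm (R (a*(gr i u - gr i v))) \<le> R 0" for i
      by (intro AE_I2 R_abs)
  qed
  have smeas: "(\<lambda>u. \<integral>v. R (a*(gr n u - gr n v)) \<partial>N2) \<in> borel_measurable N1" for n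
  proof -
    have "(\<lambda>u. \<integral>v. R (a*(gr n u - gr n v)) \<partial>N2) =
        (\<lambda>u. \<Sum>l\<in>KK n C. R (a*(gr n u - real_of_int l / real (Suc n))) * measure N2 (AA n l \<inter> space N2))"
    proof (rule ext)
      fix u show "(\<integral>v. R (a*(gr n u - gr n v)) \<partial>N2) =
        (\<Sum>l\<in>KK n C. R (a*(gr n u - real_of_int l / real (Suc n))) * measure N2 (AA n l \<inter> space N2))"
      using disc[OF f2 s2 c2, of "\<lambda>y. R (a*(gr n u - y))" n] by simp
    qed
    also have "\<dots> \<in> borel_measurable N1" by (rule meas_transfer[OF s1]) simp
    finally show ?thesis .
  qed
  have fmeas: "(\<lambda>u. \<integral>v. R (a*(u-v)) \<partial>N2) \<in> borel_measurable N1"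
    by (rule borel_measurable_LIMSEQ_real[OF inner smeas])
  show ?thesis
    unfolding Jn_def J_def
  proof (rule integral_dominated_convergence[where w="\<lambda>_. R 0 * measure N2 (space N2)"])
    show "AE u in N1. (\<lambda>i. \<integral>v. R (a*(gr i u - gr i v)) \<partial>N2) \<longlonglongrightarrow> (\<integral>v. R (a*(u-v)) \<partial>N2)"
      by (intro AE_I2 inner)
    show "AE u in N1. norm (\<integral>v. R (a*(gr i u - gr i v)) \<partial>N2) \<le> R 0 * measure N2 (space N2)" for i
      by (intro AE_I2 int_bound[OF f2] R_abs) (use pos[of 0] in simp)
  qed (auto intro: smeas fmeas)
qed

lemma pd_meas:
  assumes f1: "finite_measure N1" and s1: "sets N1 = sets (restrict_space borel S1)" and c1: "S1 \<subseteq> {-C..C}"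
    and f2: "finite_measure N2" and s2: "sets N2 = sets (restrict_space borel S2)" and c2: "S2 \<subseteq> {-C..C}"
  shows "0 \<le> J a N1 N1 - 2*t*J a N1 N2 + t^2 * J a N2 N2"
proof -
  have lim: "(\<lambda>n. Jn n a N1 N1 - 2*t*Jn n a N1 N2 + t^2 * Jn n a N2 N2) \<longlonglongrightarrow> J a N1 N1 - 2*t*J a N1 N2 + t^2 * J a N2 N2"
    by (intro tendsto_intros Jn_lim[OF f1 s1 c1 f1 s1 c1] Jn_lim[OF f1 s1 c1 f2 s2 c2] Jn_lim[OF f2 s2 c2 f2 s2 c2])
  have "0 \<le> Jn n a N1 N1 - 2*t*Jn n a N1 N2 + t^2 * Jn n a N2 N2" for n
  proof -
    let ?K = "KK n C"
    let ?m1 = "\<lambda>k. measure N1 (AA n k \<inter> space N1)"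
    let ?m2 = "\<lambda>k. measure N2 (AA n k \<inter> space N2)"
    let ?x = "\<lambda>k. a*(real_of_int k / real (Suc n))"
    let ?c = "\<lambda>k. ?m1 k - t * ?m2 k"
    have sym: "(\<Sum>k\<in>?K. \<Sum>l\<in>?K. ?m2 k * ?m1 l * R (?x k - ?x l)) = (\<Sum>k\<in>?K. \<Sum>l\<in>?K. ?m1 k * ?m2 l * R (?x k - ?x l))"
    proof -
      have "(\<Sum>k\<in>?K. \<Sum>l\<in>?K. ?m2 k * ?m1 l * R (?x k - ?x l)) = (\<Sum>l\<in>?K. \<Sum>k\<in>?K. ?m2 k * ?m1 l * R (?x k - ?x l))"
        by (rule sum.swap)
      also have "\<dots> = (\<Sum>l\<in>?K. \<Sum>k\<in>?K. ?m1 l * ?m2 k * R (?x l - ?x k))"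
        using even[of "?x l - ?x k" for l k] by (simp add: ac_simps)
      finally show ?thesis .
    qed
    have "0 \<le> (\<Sum>k\<in>?K. \<Sum>l\<in>?K. ?c k * ?c l * R (?x k - ?x l))"
      by (rule pd) (rule finite_KK)
    also have "\<dots> = (\<Sum>k\<in>?K. \<Sum>l\<in>?K. ?m1 k * ?m1 l * R (?x k - ?x l))
        - t * (\<Sum>k\<in>?K. \<Sum>l\<in>?K. ?m1 k * ?m2 l * R (?x k - ?x l))
        - t * (\<Sum>k\<in>?K. \<Sum>l\<in>?K. ?m2 k * ?m1 l * R (?x k - ?x l))
        + t^2 * (\<Sum>k\<in>?K. \<Sum>l\<in>?K. ?m2 k * ?m2 l * R (?x k - ?x l))"
      by (simp add: sum.distrib sum_subtractf sum_distrib_left algebra_simps power2_eq_square)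
    also have "\<dots> = Jn n a N1 N1 - 2*t*Jn n a N1 N2 + t^2 * Jn n a N2 N2"
      unfolding Jn_eq[OF f1 s1 c1 f1 s1 c1] Jn_eq[OF f1 s1 c1 f2 s2 c2] Jn_eq[OF f2 s2 c2 f2 s2 c2] sym
      by simp
    finally show ?thesis .
  qed
  then show ?thesis by (intro LIMSEQ_le_const[OF lim]) auto
qed


lemma quad:
  fixes Q B Dm D b :: real
  assumes "0 \<le> Q - 2*(B/Dm)*B + (B/Dm)^2*D" "D \<le> Dm" "0 < Dm" "0 \<le> b" "b \<le> B"
  shows "b^2/Dm \<le> Q"
proof -
  have "(B/Dm)^2*D \<le> (B/Dm)^2*Dm" by (rule mult_left_mono) (use assms in auto)
  also have "(B/Dm)^2*Dm = B^2/Dm" using assms(3) by (simp add: power2_eq_square field_simps)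
  finally have "0 \<le> Q - 2*(B/Dm)*B + B^2/Dm" using assms(1) by linarith
  moreover have "2*(B/Dm)*B = 2*(B^2/Dm)" by (simp add: power2_eq_square)
  ultimately have "B^2/Dm \<le> Q" by linarith
  moreover have "b^2 \<le> B^2" by (rule power_mono) (use assms in auto)
  then have "b^2/Dm \<le> B^2/Dm" by (rule divide_right_mono) (use assms in simp)
  ultimately show ?thesis by linarith
qed

lemma alg:
  fixes a c I p :: real
  shows "a \<noteq> 0 \<Longrightarrow> c \<noteq> 0 \<Longrightarrow> I \<noteq> 0 \<Longrightarrow> a * ((2*p/a)^2/(c*(2*I/a))) = 2*p^2/(c*I)"
  by (simp add: field_simps power2_eq_square)

lemma P_abs: "\<bar>P x\<bar> \<le> I"
  using P_le_I[of x] P_le_I[of "-x"] P_odd[of x] by simp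

lemma inner_L:
  assumes "0 < a" "0 \<le> \<delta>"
  shows "(\<integral>v. R (a*(u-v)) \<partial>(restrict_space lborel {-\<delta>..1+\<delta>})) = (P (a*(u+\<delta>)) + P (a*(1+\<delta>-u))) / a"
proof -
  have "(\<integral>v. R (a*(u-v)) \<partial>(restrict_space lborel {-\<delta>..1+\<delta>})) = (LINT v:{-\<delta>..1+\<delta>}|lborel. R (a*(u-v)))"
    by (simp add: integral_restrict_space set_lebesgue_integral_def)
  also have "\<dots> = (P (a*(u-(-\<delta>))) - P (a*(u-(1+\<delta>)))) / a"
    by (rule inner) (use assms in auto)
  also have "P (a*(u-(1+\<delta>))) = - P (a*(1+\<delta>-u))"
    using P_odd[of "a*(1+\<delta>-u)"] by (simp add: algebra_simps)
  finally show ?thesis by simp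
qed

lemma energy_J: "energy R a \<mu> = J a \<mu> \<mu>"
  by (simp add: energy_def J_def)

lemma U_in: "restrict_space lborel {0..1::real} \<in> prob_measures_01"
proof -
  have "prob_space (restrict_space lborel {0..1::real})"
    by (rule prob_spaceI) (simp add: space_restrict_space emeasure_restrict_space)
  then show ?thesis
    by (simp add: prob_measures_01_def sets_restrict_space)
qed

lemma energy_U: "energy R a (restrict_space lborel {0..1}) = (LINT u:{0..1}|lborel. (LINT v:{0..1}|lborel. R (a*(u-v))))"
  by (simp add: energy_def integral_restrict_space set_lebesgue_integral_def)

lemma energy_lb:
  assumes mu: "\<mu> \<in> prob_measures_01" and a: "0 < a" and d: "0 < \<delta>"
  shows "2 * P (a*\<delta>)^2 / ((1+2*\<delta>)*I) \<le> a * energy R a \<mu>"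
proof -
  have ps: "prob_space \<mu>" and smu: "sets \<mu> = sets (restrict_space borel {0..1})"
    using mu by (auto simp: prob_measures_01_def)
  interpret prob_space \<mu> by (rule ps)
  have fmu: "finite_measure \<mu>" using ps by (simp add: prob_space_def)
  have spmu: "space \<mu> = {0..1}" using sets_eq_imp_space_eq[OF smu] by (simp add: space_restrict_space)
  define L where "L = restrict_space lborel {-\<delta>..1+\<delta>}"
  have spL: "space L = {-\<delta>..1+\<delta>}" by (simp add: L_def space_restrict_space)
  have mL: "measure L (space L) = 1 + 2*\<delta>"
    using d by (simp add: spL L_def measure_restrict_space)
  have fL: "finite_measure L"
    by (rule finite_measureI) (use d in \<open>simp add: spL L_def emeasure_restrict_space\<close>)
  interpret L: finite_measure L by (rule fL)
  have sL: "sets L = sets (restrict_space borel {-\<delta>..1+\<delta>})"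
    by (simp add: L_def sets_restrict_space)
  have c1: "{0..1} \<subseteq> {-(1+\<delta>)..1+\<delta>}" and c2: "{-\<delta>..1+\<delta>} \<subseteq> {-(1+\<delta>)..1+\<delta>}" using d by auto
  note pdm = pd_meas[OF fmu smu c1 fL sL c2, of a]
  define g where "g u = (P (a*(u+\<delta>)) + P (a*(1+\<delta>-u))) / a" for u
  have Jg: "J a N L = (\<integral>u. g u \<partial>N)" for N
    unfolding J_def g_def L_def using inner_L[OF a, of \<delta>] d by simp
  have gmeas: "g \<in> borel_measurable borel" unfolding g_def by measurable
  have gabs: "norm (g u) \<le> 2*I/a" for u
  proof -
    have "\<bar>P (a*(u+\<delta>)) + P (a*(1+\<delta>-u))\<bar> \<le> 2*I"
      using P_abs[of "a*(u+\<delta>)"] P_abs[of "a*(1+\<delta>-u)"] by linarith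
    then show ?thesis using a by (simp add: g_def abs_divide divide_right_mono)
  qed
  have gle: "g u \<le> 2*I/a" for u using gabs[of u] by simp
  define B where "B = J a \<mu> L"
  define D where "D = J a L L"
  define Dm where "Dm = (1+2*\<delta>)*(2*I/a)"
  have Dm_pos: "0 < Dm" using d a I_pos by (simp add: Dm_def)
  have DDm: "D \<le> Dm"
  proof -
    have "D = (\<integral>u. g u \<partial>L)" by (simp add: D_def Jg)
    also have "\<dots> \<le> (\<integral>u. 2*I/a \<partial>L)"
      by (rule integral_mono') (use gle I_pos a in auto)
    also have "\<dots> = Dm" by (simp add: mL Dm_def)
    finally show ?thesis .
  qed
  have Bge: "2*P(a*\<delta>)/a \<le> B"
  proof -
    have "(\<integral>u. 2*P(a*\<delta>)/a \<partial>\<mu>) \<le> (\<integral>u. g u \<partial>\<mu>)"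
    proof (rule integral_mono)
      show "integrable \<mu> g"
        by (rule integrable_const_bound[where B="2*I/a"]) (use gabs in \<open>auto intro: meas_transfer[OF smu gmeas]\<close>)
      fix u assume "u \<in> space \<mu>"
      then have u: "0 \<le> u" "u \<le> 1" using spmu by auto
      have "P (a*\<delta>) \<le> P (a*(u+\<delta>))" using u a by (intro P_mono) (simp add: mult_left_mono)
      moreover have "P (a*\<delta>) \<le> P (a*(1+\<delta>-u))" using u a by (intro P_mono) (simp add: mult_left_mono)
      ultimately show "2*P(a*\<delta>)/a \<le> g u" unfolding g_def using a by (simp add: divide_right_mono)
    qed simp
    then show ?thesis by (simp add: B_def Jg prob_space)
  qed
  have b0: "0 \<le> 2*P(a*\<delta>)/a" using a d by (simp add: P_nonneg)
  have "(2*P(a*\<delta>)/a)^2/Dm \<le> J a \<mu> \<mu>"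
    by (rule quad[OF _ DDm Dm_pos b0 Bge]) (use pdm[of "B/Dm"] in \<open>simp add: B_def D_def\<close>)
  then have "a * ((2*P(a*\<delta>)/a)^2/Dm) \<le> a * J a \<mu> \<mu>" using a by (intro mult_left_mono) auto
  moreover have "a * ((2*P(a*\<delta>)/a)^2/Dm) = 2 * P (a*\<delta>)^2 / ((1+2*\<delta>)*I)"
    unfolding Dm_def by (rule alg) (use a d I_pos in auto)
  ultimately show ?thesis by (simp add: energy_J)
qed


lemma div_le: "0 < a \<Longrightarrow> L \<le> a*e \<Longrightarrow> L/a \<le> (e::real)"
  by (simp add: pos_divide_le_eq mult.commute)
lemma le_div: "0 < a \<Longrightarrow> L/a \<le> e \<Longrightarrow> L \<le> a*(e::real)"
  by (simp add: pos_divide_le_eq mult.commute)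

lemma part2: "((\<lambda>a. C_X R a / a) \<longlongrightarrow> inverse (2*I)) at_top"
proof -
  define E where "E a = Inf (energy R a ` prob_measures_01)" for a
  define U where "U = restrict_space lborel {0..1::real}"
  have ne: "energy R a ` prob_measures_01 \<noteq> {}" for a using U_in by auto
  have lbE: "2*P(a*\<delta>)^2/((1+2*\<delta>)*I) \<le> a * E a" if a: "0 < a" and d: "0 < \<delta>" for a \<delta>
  proof -
    have "2*P(a*\<delta>)^2/((1+2*\<delta>)*I) / a \<le> E a"
      unfolding E_def
    proof (rule cInf_greatest[OF ne])
      fix x assume "x \<in> energy R a ` prob_measures_01"
      then obtain \<mu> where mu: "\<mu> \<in> prob_measures_01" and x: "x = energy R a \<mu>" by auto
      show "2*P(a*\<delta>)^2/((1+2*\<delta>)*I) / a \<le> x"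
        using energy_lb[OF mu a d] unfolding x by (rule div_le[OF a])
    qed
    then show ?thesis by (rule le_div[OF a])
  qed
  have ubE: "a * E a \<le> a * energy R a U" if a: "0 < a" for a
  proof -
    have "bdd_below (energy R a ` prob_measures_01)"
    proof
      fix x assume "x \<in> energy R a ` prob_measures_01"
      then obtain \<mu> where mu: "\<mu> \<in> prob_measures_01" and x: "x = energy R a \<mu>" by auto
      show "2*P(a*1)^2/((1+2*1)*I) / a \<le> x"
        using energy_lb[OF mu a, of 1] unfolding x by (intro div_le[OF a]) auto
    qed
    then have "E a \<le> energy R a U"
      unfolding E_def U_def by (rule cInf_lower[OF imageI[OF U_in]])
    then show ?thesis using a by (intro mult_left_mono) auto
  qed
  have limE: "((\<lambda>a. a * E a) \<longlongrightarrow> 2*I) at_top"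
  proof (rule order_tendstoI)
    fix y assume y: "y < 2*I"
    define \<delta> where "\<delta> = (2*I - y)/(8*I)"
    have Ip: "0 < I" by (rule I_pos)
    have d: "0 < \<delta>" using y Ip by (simp add: \<delta>_def)
    have h: "1+2*\<delta> = (6*I - y)/(4*I)" using Ip by (simp add: \<delta>_def field_simps)
    have p6: "0 < 6*I - y" using y Ip by simp
    have e0: "2*I/(1+2*\<delta>) = 2*I/((6*I - y)/(4*I))" by (simp only: h)
    have nz: "6*I - y \<noteq> 0" "I \<noteq> 0" using Ip p6 by auto
    have e1: "2*I/(1+2*\<delta>) = 8*I^2/(6*I-y)" unfolding e0 using nz by (simp add: field_simps power2_eq_square)
    have k: "0 < (2*I - y)*(4*I - y)" by (rule mult_pos_pos) (use y Ip in auto)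
    have "(2*I - y)*(4*I - y) = 8*I^2 - y*(6*I - y)" by (simp add: algebra_simps power2_eq_square)
    then have "y*(6*I - y) < 8*I^2" using k by linarith
    then have yl: "y < 2*I/(1+2*\<delta>)" unfolding e1 using p6 by (simp add: pos_less_divide_eq)
    have "((\<lambda>a. 2*P(a*\<delta>)^2/((1+2*\<delta>)*I)) \<longlongrightarrow> 2*I^2/((1+2*\<delta>)*I)) at_top"
      using d Ip by (intro tendsto_intros P_lim_mult) auto
    moreover have "2*I^2/((1+2*\<delta>)*I) = 2*I/(1+2*\<delta>)" using Ip by (simp add: power2_eq_square)
    ultimately have "((\<lambda>a. 2*P(a*\<delta>)^2/((1+2*\<delta>)*I)) \<longlongrightarrow> 2*I/(1+2*\<delta>)) at_top" by simp
    from order_tendstoD(1)[OF this yl]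
    have "eventually (\<lambda>a. y < 2*P(a*\<delta>)^2/((1+2*\<delta>)*I)) at_top" .
    then show "eventually (\<lambda>a. y < a * E a) at_top"
      using eventually_gt_at_top[of 0]
    proof eventually_elim
      case (elim a)
      then show ?case using lbE[OF elim(2) d] by linarith
    qed
  next
    fix y assume y: "2*I < y"
    have "((\<lambda>a. a * energy R a U) \<longlongrightarrow> 2*I) at_top"
      using part1 by (simp add: U_def energy_U)
    from order_tendstoD(2)[OF this y]
    show "eventually (\<lambda>a. a * E a < y) at_top"
      using eventually_gt_at_top[of 0]
    proof eventually_elim
      case (elim a)
      then show ?case using ubE[OF elim(2)] by linarith
    qed
  qed
  have "((\<lambda>a. inverse (a * E a)) \<longlongrightarrow> inverse (2*I)) at_top"
    by (rule tendsto_inverse[OF limE]) (use I_pos in simp)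
  moreover have "eventually (\<lambda>a. inverse (a * E a) = C_X R a / a) at_top"
    by (simp add: C_X_def E_def divide_inverse mult.commute)
  ultimately show ?thesis by (rule Lim_transform_eventually)
qed

end



theorem theorem7p1:
  fixes M :: "'a measure" and X :: "real \<Rightarrow> 'a \<Rightarrow> real" and R :: "real \<Rightarrow> real"
  assumes gauss: "centered_gaussian_process M X"
    and stat: "stationary_process M X"
    and paths: "\<forall>\<omega>\<in>space M. continuous_on UNIV (\<lambda>t. X t \<omega>)"
    and R_def: "\<forall>t. R t = cov M (X 0) (X t)"
    and R_pos: "\<forall>t. R t > 0"
    and R_int: "set_integrable lborel {0..} R"
  shows "((\<lambda>a. a * (LINT u:{0..1}|lborel. (LINT v:{0..1}|lborel. R (a * (u - v)))))
            \<longlongrightarrow> 2 * (LINT t:{0..}|lborel. R t)) at_top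
       \<and> ((\<lambda>a. C_X R a / a) \<longlongrightarrow> inverse (2 * (LINT t:{0..}|lborel. R t))) at_top"
proof -
  interpret pr: proc M X R
    by (rule proc.intro) (fact gauss stat paths R_def)+
  interpret rf: Rfun R
  proof (rule Rfun.intro)
    show "continuous_on UNIV R" by (rule pr.R_cont)
    show "\<And>t. R (-t) = R t" by (rule pr.R_even)
    show "\<And>t. 0 < R t" using R_pos by simp
    show "\<And>t. R t \<le> R 0" by (rule pr.R_bnd)
    show "\<And>(K::int set) c x. finite K \<Longrightarrow> 0 \<le> (\<Sum>k\<in>K. \<Sum>l\<in>K. c k * c l * R (x k - x l))"
      by (rule pr.R_pd)
    show "set_integrable lborel {0..} R" by (rule R_int)
  qed
  show ?thesis using rf.part1 rf.part2 unfolding rf.I_def by simp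
qed

end
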